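(* Let $\mathcal X,\mathcal Y$ be complex Hilbert spaces and $A:\mathcal X\supset\operatorname{dom}A\to\mathcal Y$ a closed, densely defined linear operator such that $A^*A$ is uniformly positive, i.e. there is $c>0$ with $\|Ax\|_{\mathcal Y}\ge c\|x\|_{\mathcal X}$ for all $x\in\operatorname{dom}A$. Let $\mathcal Y_1:=\operatorname{ran}A$, regarded as a Hilbert space with the inner product of $\mathcal Y$. Let $B:\mathcal Y\supset\operatorname{dom}B\to\mathcal X$ be a closed, densely defined linear operator with $A^*\subset -B$. Define $B_{\mathcal Y_1}:\mathcal Y_1\supset\operatorname{dom}B\cap\mathcal Y_1\to\mathcal X$ by $B_{\mathcal Y_1}y=By$. Then $B_{\mathcal Y_1}$ is a closed and densely defined operator from $\mathcal Y_1$ to $\mathcal X$.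
   Context: Under the stated hypotheses $\operatorname{ran}A$ is a closed subspace of $\mathcal Y$, so $\mathcal Y_1$ is a Hilbert space. $A^*\subset -B$ means $\operatorname{dom}A^*\subset\operatorname{dom}B$ and $By=-A^*y$ for $y\in\operatorname{dom}A^*$. *)

theory Defs
  imports "HOL-Analysis.Analysis"
begin

text \<open>Complex inner product spaces (the library only has real ones).
  The inner product is linear in the first argument, conjugate-linear in the second.\<close>

class complex_inner = real_normed_vector +
  fixes scaleC :: "complex \<Rightarrow> 'a \<Rightarrow> 'a"
    and cinner :: "'a \<Rightarrow> 'a \<Rightarrow> complex"
  assumes scaleC_add_right: "scaleC a (x + y) = scaleC a x + scaleC a y"
    and scaleC_add_left: "scaleC (a + b) x = scaleC a x + scaleC b x"
    and scaleC_scaleC: "scaleC a (scaleC b x) = scaleC (a * b) x"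
    and scaleC_one: "scaleC 1 x = x"
    and scaleC_of_real: "scaleC (complex_of_real r) x = scaleR r x"
    and cinner_conj: "cinner x y = cnj (cinner y x)"
    and cinner_add_left: "cinner (x + y) z = cinner x z + cinner y z"
    and cinner_scaleC_left: "cinner (scaleC a x) y = a * cinner x y"
    and cinner_self: "cinner x x = complex_of_real ((norm x)\<^sup>2)"

class complex_hilbert = complex_inner + complete_space

definition csubspace :: "'a::complex_inner set \<Rightarrow> bool" where
  "csubspace S \<longleftrightarrow> 0 \<in> S \<and> (\<forall>x\<in>S. \<forall>y\<in>S. x + y \<in> S) \<and> (\<forall>a. \<forall>x\<in>S. scaleC a x \<in> S)"

definition linear_op :: "'a::complex_inner set \<Rightarrow> ('a \<Rightarrow> 'b::complex_inner) \<Rightarrow> bool" where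
  "linear_op D f \<longleftrightarrow> csubspace D \<and>
     (\<forall>x\<in>D. \<forall>y\<in>D. f (x + y) = f x + f y) \<and> (\<forall>a. \<forall>x\<in>D. f (scaleC a x) = scaleC a (f x))"

definition graph_op :: "'a set \<Rightarrow> ('a \<Rightarrow> 'b) \<Rightarrow> ('a \<times> 'b) set" where
  "graph_op D f = {(x, f x) | x. x \<in> D}"

definition closed_op_on :: "'a::topological_space set \<Rightarrow> 'a set \<Rightarrow> ('a \<Rightarrow> 'b::topological_space) \<Rightarrow> bool" where
  "closed_op_on S D f \<longleftrightarrow> D \<subseteq> S \<and> closedin (top_of_set (S \<times> UNIV)) (graph_op D f)"

definition densely_defined_on :: "'a::topological_space set \<Rightarrow> 'a set \<Rightarrow> bool" where
  "densely_defined_on S D \<longleftrightarrow> D \<subseteq> S \<and> S \<subseteq> closure D"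

definition adj_dom :: "'a::complex_inner set \<Rightarrow> ('a \<Rightarrow> 'b::complex_inner) \<Rightarrow> 'b set" where
  "adj_dom D f = {y. \<exists>z. \<forall>x\<in>D. cinner (f x) y = cinner x z}"

definition adj :: "'a::complex_inner set \<Rightarrow> ('a \<Rightarrow> 'b::complex_inner) \<Rightarrow> 'b \<Rightarrow> 'a" where
  "adj D f y = (SOME z. \<forall>x\<in>D. cinner (f x) y = cinner x z)"

end

theory Submission
  imports Defs
begin


lemma cinner_zero_left[simp]: "cinner 0 y = 0"
proof -
  have "cinner (0+0) y = cinner 0 y + cinner 0 y" by (rule cinner_add_left)
  thus ?thesis by simp
qed

lemma cinner_zero_right[simp]: "cinner x 0 = 0"
  by (metis cinner_conj cinner_zero_left complex_cnj_zero)

lemma cinner_minus_left: "cinner (- x) y = - cinner x y"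
proof -
  have "cinner (x + - x) y = cinner x y + cinner (-x) y" by (rule cinner_add_left)
  hence "cinner x y + cinner (-x) y = 0" by simp
  thus ?thesis by (metis add.commute eq_neg_iff_add_eq_0)
qed

lemma cinner_diff_left: "cinner (x - y) z = cinner x z - cinner y z"
  using cinner_add_left[of x "-y" z] cinner_minus_left[of y z] by simp

lemma cinner_add_right: "cinner x (y + z) = cinner x y + cinner x z"
  by (metis cinner_add_left cinner_conj complex_cnj_add)

lemma cinner_minus_right: "cinner x (- y) = - cinner x y"
  by (metis cinner_conj cinner_minus_left complex_cnj_minus)

lemma cinner_diff_right: "cinner x (y - z) = cinner x y - cinner x z"
  using cinner_add_right[of x y "-z"] cinner_minus_right[of x z] by simp

lemma cinner_scaleC_right: "cinner x (scaleC a y) = cnj a * cinner x y"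
  by (metis cinner_conj cinner_scaleC_left complex_cnj_mult)

lemma cinner_scaleR_left: "cinner (scaleR r x) y = of_real r * cinner x y"
  by (metis cinner_scaleC_left scaleC_of_real)

lemma scaleC_minus1: "scaleC (-1) x = - x"
  by (metis of_real_1 of_real_minus scaleC_of_real scaleR_minus1_left)

lemma scaleC_zero_right[simp]: "scaleC a 0 = 0"
proof -
  have "scaleC a (0+0) = scaleC a 0 + scaleC a 0" by (rule scaleC_add_right)
  thus ?thesis by simp
qed

lemma scaleC_minus_right: "scaleC a (- x) = - scaleC a x"
proof -
  have "scaleC a (x + - x) = scaleC a x + scaleC a (-x)" by (rule scaleC_add_right)
  hence "scaleC a x + scaleC a (-x) = 0" by simp
  thus ?thesis by (metis add.commute eq_neg_iff_add_eq_0)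
qed

lemma scaleC_diff_right: "scaleC a (x - y) = scaleC a x - scaleC a y"
  using scaleC_add_right[of a x "-y"] scaleC_minus_right[of a y] by simp

lemma Re_cinner_self: "Re (cinner x x) = (norm x)\<^sup>2"
  by (simp add: cinner_self)

lemma cinner_self_eq0: "cinner x x = 0 \<longleftrightarrow> x = 0"
  by (simp add: cinner_self)

lemma norm_add_sq: "(norm (x + y))\<^sup>2 = (norm x)\<^sup>2 + 2 * Re (cinner x y) + (norm y)\<^sup>2"
proof -
  have "cinner (x+y) (x+y) = cinner x x + cinner x y + cinner y x + cinner y y"
    by (simp add: cinner_add_left cinner_add_right)
  moreover have "cinner y x = cnj (cinner x y)" by (rule cinner_conj)
  ultimately have "Re (cinner (x+y) (x+y)) = Re (cinner x x) + 2 * Re (cinner x y) + Re (cinner y y)"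
    by simp
  thus ?thesis by (simp add: Re_cinner_self)
qed

lemma norm_diff_sq: "(norm (x - y))\<^sup>2 = (norm x)\<^sup>2 - 2 * Re (cinner x y) + (norm y)\<^sup>2"
  using norm_add_sq[of x "-y"] by (simp add: cinner_minus_right)

lemma norm_scaleC: "norm (scaleC a x) = cmod a * norm x"
proof -
  have "cinner (scaleC a x) (scaleC a x) = (a * cnj a) * cinner x x"
    by (simp add: cinner_scaleC_left cinner_scaleC_right)
  also have "a * cnj a = of_real ((cmod a)\<^sup>2)" by (simp add: complex_norm_square[symmetric])
  also have "cinner x x = of_real ((norm x)\<^sup>2)" by (rule cinner_self)
  finally have "of_real ((norm (scaleC a x))\<^sup>2) = (of_real ((cmod a * norm x)\<^sup>2) :: complex)"
    by (simp add: cinner_self power_mult_distrib)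
  hence "(norm (scaleC a x))\<^sup>2 = (cmod a * norm x)\<^sup>2" using of_real_eq_iff by blast
  thus ?thesis by (rule power2_eq_imp_eq) simp_all
qed

lemma parallelogram: "(norm ((x::'a::complex_inner) + y))\<^sup>2 + (norm (x - y))\<^sup>2 = 2 * (norm x)\<^sup>2 + 2 * (norm y)\<^sup>2"
  using norm_add_sq[of x y] norm_diff_sq[of x y] by simp

lemma cauchy_schwarz: "cmod (cinner x y) \<le> norm x * norm y"
proof (cases "y = 0")
  case True thus ?thesis by simp
next
  case False
  define a where "a = cinner x y"
  define n where "n = (norm y)\<^sup>2"
  have n: "n > 0" using False by (simp add: n_def)
  define t where "t = a / of_real n"
  have "cinner (x - scaleC t y) (x - scaleC t y)
      = cinner x x - cnj t * a - t * cinner y x + t * cnj t * cinner y y"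
    by (simp add: cinner_diff_left cinner_diff_right cinner_scaleC_left cinner_scaleC_right a_def
        algebra_simps)
  also have "cinner y x = cnj a" by (simp add: a_def cinner_conj[of y x])
  also have "cinner y y = of_real n" by (simp add: n_def cinner_self)
  finally have eq: "cinner (x - scaleC t y) (x - scaleC t y) = cinner x x - cnj t * a - t * cnj a + t * cnj t * of_real n" .
  have "t * cnj t * of_real n = a * cnj a / of_real n" using n by (simp add: t_def field_simps)
  moreover have "cnj t * a = a * cnj a / of_real n" by (simp add: t_def)
  moreover have "t * cnj a = a * cnj a / of_real n" by (simp add: t_def)
  ultimately have "cinner (x - scaleC t y) (x - scaleC t y) = cinner x x - a * cnj a / of_real n"
    using eq by simp
  moreover have "a * cnj a / of_real n = of_real ((cmod a)\<^sup>2 / n)"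
    by (simp add: complex_norm_square[symmetric])
  ultimately have "Re (cinner (x - scaleC t y) (x - scaleC t y)) = (norm x)\<^sup>2 - (cmod a)\<^sup>2 / n"
    by (simp add: cinner_self)
  moreover have "Re (cinner (x - scaleC t y) (x - scaleC t y)) \<ge> 0" by (simp add: Re_cinner_self)
  ultimately have "(cmod a)\<^sup>2 \<le> (norm x)\<^sup>2 * n" using n
    apply (simp add: field_simps)
    by (smt (verit) mult_nonneg_nonneg)
  hence "(cmod a)\<^sup>2 \<le> (norm x * norm y)\<^sup>2" by (simp add: n_def power_mult_distrib)
  hence "cmod a \<le> norm x * norm y" by (rule power2_le_imp_le) simp
  thus ?thesis unfolding a_def .
qed



lemma csubspace_add: "csubspace S \<Longrightarrow> x \<in> S \<Longrightarrow> y \<in> S \<Longrightarrow> x + y \<in> S"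
  unfolding csubspace_def by blast

lemma csubspace_scaleC: "csubspace S \<Longrightarrow> x \<in> S \<Longrightarrow> scaleC a x \<in> S"
  unfolding csubspace_def by blast

lemma csubspace_scaleR: "csubspace S \<Longrightarrow> x \<in> S \<Longrightarrow> scaleR r x \<in> S"
  using csubspace_scaleC[of S x "complex_of_real r"] by (simp add: scaleC_of_real)

lemma csubspace_0: "csubspace S \<Longrightarrow> 0 \<in> S"
  unfolding csubspace_def by blast

lemma csubspace_diff: "csubspace S \<Longrightarrow> x \<in> S \<Longrightarrow> y \<in> S \<Longrightarrow> x - y \<in> S"
  using csubspace_add[of S x "scaleC (-1) y"] csubspace_scaleC[of S y "-1"]
  by (simp add: scaleC_minus1)

lemma tendsto_scaleC:
  assumes "f \<longlonglongrightarrow> l"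
  shows "(\<lambda>n. scaleC a (f n)) \<longlonglongrightarrow> scaleC a l"
proof -
  have "(\<lambda>n. f n - l) \<longlonglongrightarrow> 0" using assms by (rule LIM_zero)
  hence "(\<lambda>n. norm (f n - l)) \<longlonglongrightarrow> 0" by (rule tendsto_norm_zero)
  hence "(\<lambda>n. cmod a * norm (f n - l)) \<longlonglongrightarrow> 0" by (rule tendsto_mult_right_zero)
  hence "(\<lambda>n. norm (scaleC a (f n) - scaleC a l)) \<longlonglongrightarrow> 0"
    by (simp add: norm_scaleC flip: scaleC_diff_right)
  hence "(\<lambda>n. scaleC a (f n) - scaleC a l) \<longlonglongrightarrow> 0" by (rule tendsto_norm_zero_cancel)
  thus ?thesis by (rule LIM_zero_cancel)
qed

lemma closure_csubspace:
  assumes S: "csubspace S"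
  shows "csubspace (closure S)"
  unfolding csubspace_def
proof (intro conjI ballI allI)
  show "0 \<in> closure S" using csubspace_0[OF S] closure_subset by (rule subsetD[rotated])
next
  fix x y assume x: "x \<in> closure S" and y: "y \<in> closure S"
  obtain f where f: "\<And>n. f n \<in> S" "f \<longlonglongrightarrow> x" using x unfolding closure_sequential by blast
  obtain g where g: "\<And>n. g n \<in> S" "g \<longlonglongrightarrow> y" using y unfolding closure_sequential by blast
  have "(\<lambda>n. f n + g n) \<longlonglongrightarrow> x + y" using f g by (intro tendsto_add)
  moreover have "\<And>n. f n + g n \<in> S" using f g csubspace_add[OF S] by blast
  ultimately show "x + y \<in> closure S" unfolding closure_sequential
    by (intro exI[of _ "\<lambda>n. f n + g n"]) simp
next
  fix a and x assume x: "x \<in> closure S"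
  obtain f where f: "\<And>n. f n \<in> S" "f \<longlonglongrightarrow> x" using x unfolding closure_sequential by blast
  have "(\<lambda>n. scaleC a (f n)) \<longlonglongrightarrow> scaleC a x" using f by (intro tendsto_scaleC)
  moreover have "\<And>n. scaleC a (f n) \<in> S" using f csubspace_scaleC[OF S] by blast
  ultimately show "scaleC a x \<in> closure S" unfolding closure_sequential
    by (intro exI[of _ "\<lambda>n. scaleC a (f n)"]) simp
qed

lemma quad_zero:
  fixes R K :: real
  assumes "\<And>t. 0 \<le> - 2 * t * R + t\<^sup>2 * K" and "K \<ge> 0"
  shows "R = 0"
proof -
  define u where "u = R / (K + 1)"
  have K1: "K + 1 \<noteq> 0" using assms(2) by simp
  have R: "R = u * (K + 1)" using K1 by (simp add: u_def)
  have "0 \<le> - 2 * u * R + u\<^sup>2 * K" by (rule assms(1))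
  hence "0 \<le> - (u * u) * (K + 2)" by (simp add: R power2_eq_square algebra_simps)
  moreover have "u * u \<ge> 0" by simp
  ultimately have "u * u = 0" using assms(2)
    by (smt (verit) mult_pos_pos zero_le_mult_iff)
  thus ?thesis using R by simp
qed

lemma projection:
  fixes y :: "'a::complex_hilbert"
  assumes M: "closed M" "csubspace M"
  shows "\<exists>p\<in>M. \<forall>m\<in>M. cinner (y - p) m = 0"
proof -
  define D where "D = (\<lambda>m. norm (y - m)) ` M"
  define d where "d = Inf D"
  have Dne: "D \<noteq> {}" using csubspace_0[OF M(2)] D_def by blast
  have bdd: "bdd_below D" unfolding D_def by (rule bdd_belowI[of _ 0]) auto
  have d_le: "\<And>m. m \<in> M \<Longrightarrow> d \<le> norm (y - m)"
    unfolding d_def D_def using bdd D_def by (intro cInf_lower) auto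
  have d0: "d \<ge> 0" unfolding d_def using Dne by (intro cInf_greatest) (auto simp: D_def)
  have "\<forall>n. \<exists>m\<in>M. norm (y - m) < d + inverse (real (Suc n))"
  proof
    fix n
    have "Inf D < d + inverse (real (Suc n))" by (simp add: d_def)
    then obtain r where "r \<in> D" "r < d + inverse (real (Suc n))" using cInf_lessD[OF Dne] by blast
    thus "\<exists>m\<in>M. norm (y - m) < d + inverse (real (Suc n))" unfolding D_def by blast
  qed
  then obtain mm where mmM: "\<And>n. mm n \<in> M"
    and mmd: "\<And>n. norm (y - mm n) < d + inverse (real (Suc n))" by metis
  define e where "e = (\<lambda>n::nat. inverse (real (Suc n)))"
  have e_pos: "\<And>n. e n > 0" by (simp add: e_def)
  have e_le1: "\<And>n. e n \<le> 1" by (simp add: e_def inverse_le_1_iff)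
  have e_mono: "\<And>n N. N \<le> n \<Longrightarrow> e n \<le> e N" by (simp add: e_def le_imp_inverse_le)
  have key: "(norm (mm m - mm n))\<^sup>2 \<le> 2 * (d + e m)\<^sup>2 + 2 * (d + e n)\<^sup>2 - 4 * d\<^sup>2" for m n
  proof -
    define a where "a = y - mm m"
    define b where "b = y - mm n"
    define mid where "mid = scaleR (1/2) (mm m + mm n)"
    have midM: "mid \<in> M" unfolding mid_def
      using mmM M(2) csubspace_add csubspace_scaleR by blast
    have "scaleR 2 (y - mid) = scaleR 2 y - (mm m + mm n)"
      by (simp add: mid_def scaleR_right_diff_distrib)
    also have "scaleR 2 y = y + y" by (rule scaleR_2)
    finally have "a + b = scaleR 2 (y - mid)" unfolding a_def b_def
      by (simp add: algebra_simps)
    hence "norm (a + b) = 2 * norm (y - mid)" by simp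
    hence "norm (a + b) \<ge> 2 * d" using d_le[OF midM] by simp
    hence "(2 * d)\<^sup>2 \<le> (norm (a + b))\<^sup>2" using d0 by (intro power_mono) auto
    hence ab: "(norm (a + b))\<^sup>2 \<ge> 4 * d\<^sup>2" by (simp add: power_mult_distrib)
    have "norm (a - b) = norm (mm m - mm n)" unfolding a_def b_def by (simp add: norm_minus_commute)
    moreover have "(norm a)\<^sup>2 \<le> (d + e m)\<^sup>2" unfolding a_def
      using mmd[of m] by (intro power_mono) (auto simp: e_def)
    moreover have "(norm b)\<^sup>2 \<le> (d + e n)\<^sup>2" unfolding b_def
      using mmd[of n] by (intro power_mono) (auto simp: e_def)
    ultimately show ?thesis using parallelogram[of a b] ab by (smt (verit))
  qed
  have "Cauchy mm"
  proof (rule CauchyI)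
    fix eps :: real assume eps: "eps > 0"
    have "eps\<^sup>2 / (4 * (2 * d + 1)) > 0" using eps d0 by simp
    then obtain N where N: "inverse (real (Suc N)) < eps\<^sup>2 / (4 * (2 * d + 1))"
      using reals_Archimedean by blast
    have "e N * (4 * (2 * d + 1)) < eps\<^sup>2" using N d0 by (simp add: e_def field_simps)
    show "\<exists>N. \<forall>m\<ge>N. \<forall>n\<ge>N. norm (mm m - mm n) < eps"
    proof (intro exI allI impI)
      fix m n assume mN: "m \<ge> N" and nN: "n \<ge> N"
      have "(d + e m)\<^sup>2 \<le> (d + e N)\<^sup>2" using e_mono[OF mN] e_pos d0
        by (intro power_mono) (auto simp: less_imp_le)
      moreover have "(d + e n)\<^sup>2 \<le> (d + e N)\<^sup>2" using e_mono[OF nN] e_pos d0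
        by (intro power_mono) (auto simp: less_imp_le)
      ultimately have "(norm (mm m - mm n))\<^sup>2 \<le> 4 * ((d + e N)\<^sup>2 - d\<^sup>2)" using key[of m n] by (smt (verit))
      also have "\<dots> = 4 * e N * (2 * d + e N)" by (simp add: power2_eq_square algebra_simps)
      also have "\<dots> \<le> 4 * e N * (2 * d + 1)" using e_le1[of N] e_pos[of N] by simp
      also have "\<dots> < eps\<^sup>2" using \<open>e N * (4 * (2 * d + 1)) < eps\<^sup>2\<close> by (simp add: algebra_simps)
      finally have "(norm (mm m - mm n))\<^sup>2 < eps\<^sup>2" .
      thus "norm (mm m - mm n) < eps" using eps by (simp add: power_less_imp_less_base less_imp_le)
    qed
  qed
  then obtain p where p: "mm \<longlonglongrightarrow> p" using Cauchy_convergent convergent_def by blast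
  have pM: "p \<in> M" using closed_sequentially[OF M(1) mmM p] .
  have "(\<lambda>n. norm (y - mm n)) \<longlonglongrightarrow> norm (y - p)" using p by (intro tendsto_intros)
  moreover have "(\<lambda>n. d + inverse (real (Suc n))) \<longlonglongrightarrow> d + 0"
    by (intro tendsto_intros LIMSEQ_inverse_real_of_nat)
  ultimately have "norm (y - p) \<le> d + 0" using mmd by (intro LIMSEQ_le) (auto simp: less_imp_le)
  hence pmin: "\<And>m. m \<in> M \<Longrightarrow> norm (y - p) \<le> norm (y - m)" using d_le by (metis add_0_right order_trans)
  define z where "z = y - p"
  have Re0: "Re (cinner z m) = 0" if mM: "m \<in> M" for m
  proof (rule quad_zero)
    fix t :: real
    have "p + scaleR t m \<in> M" using pM mM M(2) csubspace_add csubspace_scaleR by blast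
    hence "norm (y - p) \<le> norm (y - (p + scaleR t m))" by (rule pmin)
    moreover have "y - (p + scaleR t m) = z - scaleR t m" by (simp add: z_def algebra_simps)
    ultimately have "norm z \<le> norm (z - scaleR t m)" by (simp add: z_def)
    hence "(norm z)\<^sup>2 \<le> (norm (z - scaleR t m))\<^sup>2" by (simp add: power_mono)
    also have "\<dots> = (norm z)\<^sup>2 - 2 * Re (cinner z (scaleR t m)) + (norm (scaleR t m))\<^sup>2"
      by (rule norm_diff_sq)
    also have "cinner z (scaleR t m) = of_real t * cinner z m"
      by (simp add: cinner_scaleC_right flip: scaleC_of_real)
    also have "(norm (scaleR t m))\<^sup>2 = t\<^sup>2 * (norm m)\<^sup>2" by (simp add: power_mult_distrib)
    finally show "0 \<le> - 2 * t * Re (cinner z m) + t\<^sup>2 * (norm m)\<^sup>2" by simp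
  qed simp
  have "cinner z m = 0" if mM: "m \<in> M" for m
  proof -
    have "scaleC \<i> m \<in> M" using mM M(2) csubspace_scaleC by blast
    hence "Re (cinner z (scaleC \<i> m)) = 0" by (rule Re0)
    hence "Im (cinner z m) = 0" by (simp add: cinner_scaleC_right)
    thus ?thesis using Re0[OF mM] by (simp add: complex_eq_iff)
  qed
  thus ?thesis using pM unfolding z_def by blast
qed

lemma dense_crit:
  fixes M :: "'a::complex_hilbert set"
  assumes M: "closed M" "csubspace M" and S: "csubspace S" "S \<subseteq> M"
    and orth: "\<And>w. w \<in> M \<Longrightarrow> (\<forall>s\<in>S. cinner s w = 0) \<Longrightarrow> w = 0"
  shows "M \<subseteq> closure S"
proof
  fix y assume yM: "y \<in> M"
  have K: "closed (closure S)" "csubspace (closure S)" using closure_csubspace[OF S(1)] by auto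
  obtain p where pK: "p \<in> closure S" and p: "\<forall>k\<in>closure S. cinner (y - p) k = 0"
    using projection[OF K, of y] by blast
  have "closure S \<subseteq> M" using closure_minimal[OF S(2) M(1)] .
  hence "y - p \<in> M" using yM pK csubspace_diff[OF M(2)] by blast
  moreover have "\<forall>s\<in>S. cinner s (y - p) = 0"
  proof
    fix s assume "s \<in> S"
    hence "cinner (y - p) s = 0" using p closure_subset by blast
    thus "cinner s (y - p) = 0" by (subst cinner_conj) simp
  qed
  ultimately have "y - p = 0" by (rule orth)
  thus "y \<in> closure S" using pK by simp
qed



lemma csubspace_Int: "csubspace S \<Longrightarrow> csubspace T \<Longrightarrow> csubspace (S \<inter> T)"
  unfolding csubspace_def by blast

lemma csubspace_UNIV: "csubspace UNIV"
  unfolding csubspace_def by blast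

lemma csubspace_orth: "csubspace {x. cinner x u = 0}"
  unfolding csubspace_def by (simp add: cinner_add_left cinner_scaleC_left)

lemma linop_diff:
  assumes "linear_op D f" "x \<in> D" "y \<in> D"
  shows "f (x - y) = f x - f y"
proof -
  have D: "csubspace D" using assms(1) linear_op_def by blast
  have "scaleC (-1) y \<in> D" using csubspace_scaleC[OF D assms(3)] .
  hence "f (x + scaleC (-1) y) = f x + f (scaleC (-1) y)" using assms linear_op_def by blast
  also have "f (scaleC (-1) y) = scaleC (-1) (f y)" using assms linear_op_def by blast
  finally show ?thesis by (simp add: scaleC_minus1)
qed

lemma linop_0:
  assumes "linear_op D f" shows "f 0 = 0"
proof -
  have D: "csubspace D" using assms(1) linear_op_def by blast
  have "0 \<in> D" using csubspace_0[OF D] .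
  thus ?thesis using linop_diff[OF assms, of 0 0] by simp
qed

lemma lin_image:
  assumes f: "linear_op D f" and E: "csubspace E" "E \<subseteq> D"
  shows "csubspace (f ` E)"
  unfolding csubspace_def
proof (intro conjI ballI allI)
  show "0 \<in> f ` E" using linop_0[OF f] csubspace_0[OF E(1)] by (metis image_eqI)
next
  fix a b assume "a \<in> f ` E" "b \<in> f ` E"
  then obtain x y where xy: "x \<in> E" "y \<in> E" "a = f x" "b = f y" by blast
  have "f (x + y) = f x + f y" using f xy E(2) linear_op_def by blast
  moreover have "x + y \<in> E" using csubspace_add[OF E(1) xy(1,2)] .
  ultimately show "a + b \<in> f ` E" using xy by (metis image_eqI)
next
  fix c a assume "a \<in> f ` E"
  then obtain x where x: "x \<in> E" "a = f x" by blast
  have "f (scaleC c x) = scaleC c (f x)" using f x E(2) linear_op_def by blast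
  moreover have "scaleC c x \<in> E" using csubspace_scaleC[OF E(1) x(1)] .
  ultimately show "scaleC c a \<in> f ` E" using x by (metis image_eqI)
qed

lemma closed_orth: "closed {x. cinner x u = 0}"
  unfolding closed_sequential_limits
proof (intro allI impI, elim conjE)
  fix f l assume f: "\<forall>n. f n \<in> {x. cinner x u = 0}" and fl: "f \<longlonglongrightarrow> l"
  have "(\<lambda>n. norm (f n - l)) \<longlonglongrightarrow> 0" using fl by (intro tendsto_norm_zero LIM_zero)
  hence "(\<lambda>n. norm (f n - l) * norm u) \<longlonglongrightarrow> 0" by (rule tendsto_mult_left_zero)
  moreover have "cmod (cinner l u) \<le> norm (f n - l) * norm u" for n
  proof -
    have "cinner (f n - l) u = - cinner l u" using f by (simp add: cinner_diff_left)
    thus ?thesis using cauchy_schwarz[of "f n - l" u] by simp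
  qed
  ultimately have "cmod (cinner l u) \<le> 0"
    by (intro LIMSEQ_le_const[of "\<lambda>n. norm (f n - l) * norm u"]) auto
  thus "l \<in> {x. cinner x u = 0}" by simp
qed

lemma closed_image:
  fixes DA :: "'x::complex_hilbert set" and A :: "'x \<Rightarrow> 'y::complex_hilbert"
  assumes lin: "linear_op DA A" and G: "closed (graph_op DA A)"
    and c: "c > 0" "\<forall>x\<in>DA. norm (A x) \<ge> c * norm x"
    and C: "closed C"
  shows "closed (A ` (DA \<inter> C))"
  unfolding closed_sequential_limits
proof (intro allI impI, elim conjE)
  have D: "csubspace DA" using lin linear_op_def by blast
  fix y l assume y: "\<forall>n. y n \<in> A ` (DA \<inter> C)" and yl: "y \<longlonglongrightarrow> l"
  hence "\<forall>n. \<exists>z. z \<in> DA \<and> z \<in> C \<and> y n = A z" by blast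
  then obtain x where "\<forall>n. x n \<in> DA \<and> x n \<in> C \<and> y n = A (x n)"
    using choice[of "\<lambda>n z. z \<in> DA \<and> z \<in> C \<and> y n = A z"] by blast
  hence x: "\<And>n. x n \<in> DA" "\<And>n. x n \<in> C" "\<And>n. y n = A (x n)" by auto
  have "Cauchy y" using yl by (rule LIMSEQ_imp_Cauchy)
  have "Cauchy x"
  proof (rule CauchyI)
    fix e :: real assume e: "e > 0"
    then obtain N where N: "\<forall>m\<ge>N. \<forall>n\<ge>N. norm (y m - y n) < c * e"
      using CauchyD[OF \<open>Cauchy y\<close>, of "c * e"] c by auto
    show "\<exists>N. \<forall>m\<ge>N. \<forall>n\<ge>N. norm (x m - x n) < e"
    proof (intro exI allI impI)
      fix m n assume "m \<ge> N" "n \<ge> N"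
      hence "norm (y m - y n) < c * e" using N by blast
      moreover have "y m - y n = A (x m - x n)" using x linop_diff[OF lin] by simp
      moreover have "c * norm (x m - x n) \<le> norm (A (x m - x n))"
        using c csubspace_diff[OF D x(1) x(1)] by blast
      ultimately have "c * norm (x m - x n) < c * e" by simp
      thus "norm (x m - x n) < e" using c by simp
    qed
  qed
  then obtain xl where xl: "x \<longlonglongrightarrow> xl" using Cauchy_convergent convergent_def by blast
  have "xl \<in> C" using closed_sequentially[OF C x(2) xl] .
  have "(\<lambda>n. (x n, y n)) \<longlonglongrightarrow> (xl, l)" using xl yl by (rule tendsto_Pair)
  moreover have "\<And>n. (x n, y n) \<in> graph_op DA A" using x unfolding graph_op_def by blast
  ultimately have "(xl, l) \<in> graph_op DA A" using closed_sequentially[OF G, of "\<lambda>n. (x n, y n)"] by blast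
  hence "xl \<in> DA" "l = A xl" unfolding graph_op_def by auto
  thus "l \<in> A ` (DA \<inter> C)" using \<open>xl \<in> C\<close> by blast
qed

theorem lemma3p1:
  fixes DA :: "'x::complex_hilbert set" and A :: "'x \<Rightarrow> 'y::complex_hilbert"
    and DB :: "'y set" and B :: "'y \<Rightarrow> 'x"
  assumes A_lin: "linear_op DA A"
    and A_closed: "closed_op_on UNIV DA A"
    and A_dense: "densely_defined_on UNIV DA"
    and A_unif_pos: "\<exists>c>0. \<forall>x\<in>DA. norm (A x) \<ge> c * norm x"
    and B_lin: "linear_op DB B"
    and B_closed: "closed_op_on UNIV DB B"
    and B_dense: "densely_defined_on UNIV DB"
    and adj_sub: "\<forall>y\<in>adj_dom DA A. y \<in> DB \<and> B y = - adj DA A y"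
  shows "linear_op (DB \<inter> A ` DA) B
       \<and> closed_op_on (A ` DA) (DB \<inter> A ` DA) B
       \<and> densely_defined_on (A ` DA) (DB \<inter> A ` DA)"
proof -
  obtain c where c: "c > 0" "\<forall>x\<in>DA. norm (A x) \<ge> c * norm x" using A_unif_pos by blast
  have DA: "csubspace DA" using A_lin linear_op_def by blast
  have DB: "csubspace DB" using B_lin linear_op_def by blast
  define M where "M = A ` DA"
  have Msub: "csubspace M" unfolding M_def using lin_image[OF A_lin DA] by blast
  have closed_of: "closed S" if "closedin (top_of_set (UNIV \<times> UNIV)) S" for S :: "('p::topological_space \<times> 'q::topological_space) set"
  proof -
    from that obtain T where "closed T" "S = (UNIV \<times> UNIV) \<inter> T" unfolding closedin_closed by (elim exE conjE)
    thus ?thesis by simp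
  qed
  have GA: "closed (graph_op DA A)" using A_closed closed_of unfolding closed_op_on_def by blast
  have GB: "closed (graph_op DB B)" using B_closed closed_of unfolding closed_op_on_def by blast
  have "M = A ` (DA \<inter> UNIV)" by (simp add: M_def)
  hence Mclosed: "closed M" using closed_image[OF A_lin GA c closed_UNIV] by simp
  have S: "csubspace (DB \<inter> M)" using csubspace_Int[OF DB Msub] .
  have B1: "\<forall>x\<in>DB. \<forall>y\<in>DB. B (x + y) = B x + B y" and B2: "\<forall>a. \<forall>x\<in>DB. B (scaleC a x) = scaleC a (B x)"
    using B_lin unfolding linear_op_def by simp_all
  have lin: "linear_op (DB \<inter> M) B"
    unfolding linear_op_def using S B1 B2 by simp
  have cl: "closed_op_on M (DB \<inter> M) B"
    unfolding closed_op_on_def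
  proof
    show "DB \<inter> M \<subseteq> M" by blast
    have "graph_op (DB \<inter> M) B = (M \<times> UNIV) \<inter> graph_op DB B"
      unfolding graph_op_def by auto
    thus "closedin (top_of_set (M \<times> UNIV)) (graph_op (DB \<inter> M) B)"
      unfolding closedin_closed using GB by (intro exI[of _ "graph_op DB B"]) simp
  qed
  have orth: "w = 0" if wM: "w \<in> M" and ws: "\<forall>s\<in>DB \<inter> M. cinner s w = 0" for w
  proof -
    obtain x0 where x0: "x0 \<in> DA" "w = A x0" using wM M_def by blast
    show ?thesis
    proof (rule ccontr)
      assume "w \<noteq> 0"
      hence "x0 \<noteq> 0" using x0 linop_0[OF A_lin] by auto
      define n0 where "n0 = cinner x0 x0"
      have n0: "n0 \<noteq> 0" using \<open>x0 \<noteq> 0\<close> by (simp add: n0_def cinner_self_eq0)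
      define N where "N = A ` (DA \<inter> {x. cinner x x0 = 0})"
      have Nsub: "csubspace N" unfolding N_def
        using lin_image[OF A_lin csubspace_Int[OF DA csubspace_orth]] by blast
      have Ncl: "closed N" unfolding N_def using closed_image[OF A_lin GA c closed_orth] .
      obtain p where pN: "p \<in> N" and p: "\<forall>n\<in>N. cinner (w - p) n = 0"
        using projection[OF Ncl Nsub, of w] by blast
      define z where "z = w - p"
      have NM: "N \<subseteq> M" unfolding N_def M_def by blast
      have zM: "z \<in> M" unfolding z_def using csubspace_diff[OF Msub wM] pN NM by blast
      have "z \<in> adj_dom DA A"
        unfolding adj_dom_def
      proof (intro CollectI exI ballI)
        fix x assume x: "x \<in> DA"
        define k where "k = cinner x x0 / n0"
        have kx0: "scaleC k x0 \<in> DA" using csubspace_scaleC[OF DA x0(1)] .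
        have x'D: "x - scaleC k x0 \<in> DA" using csubspace_diff[OF DA x kx0] .
        have "cinner (x - scaleC k x0) x0 = cinner x x0 - k * n0"
          by (simp add: cinner_diff_left cinner_scaleC_left n0_def)
        also have "\<dots> = 0" using n0 by (simp add: k_def)
        finally have "A (x - scaleC k x0) \<in> N" unfolding N_def using x'D by blast
        hence "cinner z (A (x - scaleC k x0)) = 0" using p z_def by blast
        hence "cinner (A (x - scaleC k x0)) z = 0" by (subst cinner_conj) simp
        moreover have "A (x - scaleC k x0) = A x - scaleC k w"
          using linop_diff[OF A_lin x kx0] A_lin x0 unfolding linear_op_def by simp
        ultimately have "cinner (A x) z = k * cinner w z"
          by (simp add: cinner_diff_left cinner_scaleC_left)
        also have "\<dots> = cinner x (scaleC (cnj (cinner w z / n0)) x0)"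
          by (simp add: cinner_scaleC_right k_def)
        finally show "cinner (A x) z = cinner x (scaleC (cnj (cinner w z / n0)) x0)" .
      qed
      hence "z \<in> DB" using adj_sub by blast
      hence "cinner z w = 0" using ws zM by blast
      hence wz: "cinner w z = 0" by (subst cinner_conj) simp
      have "cinner z p = 0" using p pN z_def by blast
      hence pz: "cinner p z = 0" by (subst cinner_conj) simp
      have "cinner z z = 0" using wz pz by (simp add: z_def cinner_diff_left)
      hence "w = p" by (simp add: cinner_self_eq0 z_def)
      then obtain x' where x': "x' \<in> DA" "cinner x' x0 = 0" "w = A x'" using pN N_def by blast
      have "A (x' - x0) = 0" using linop_diff[OF A_lin x'(1) x0(1)] x' x0 by simp
      moreover have "c * norm (x' - x0) \<le> norm (A (x' - x0))"
        using c csubspace_diff[OF DA x'(1) x0(1)] by blast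
      ultimately have "x' = x0" using c by (simp add: mult_le_0_iff)
      thus False using x'(2) n0 n0_def by simp
    qed
  qed
  have "M \<subseteq> closure (DB \<inter> M)"
    by (rule dense_crit[OF Mclosed Msub S]) (use orth in auto)
  hence dd: "densely_defined_on M (DB \<inter> M)" unfolding densely_defined_on_def by blast
  show ?thesis using lin cl dd unfolding M_def by blast
qed

end
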